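(* Let $m\ge3$, $\Lambda\in\mathbb{R}$, and let $u:(\mathbb{R}^m\setminus\{0\})\times(-\infty,\Lambda)\to\mathbb{R}$ be a solution of the heat equation $\partial_tu=\Delta u$ with respect to the Euclidean metric. Suppose there exist $C>0$ and $0<\nu<m-2$ with $|\nabla^\ell u(x,t)|\le C|x|^{-\nu-\ell}$ for all $x\neq0$, $t\in(-\infty,\Lambda)$ and $\ell\in\{0,1,2\}$. Then $u\equiv0$. *)

theory Defs
  imports "HOL-Analysis.Analysis"
begin

end

theory Submission
  imports Defs
begin

lemma second_deriv_max_1d:
  fixes g g' :: "real \<Rightarrow> real"
  assumes d: "d > 0"
    and dg: "\<And>s. \<bar>s\<bar> < d \<Longrightarrow> (g has_real_derivative g' s) (at s)"
    and dg2: "(g' has_real_derivative g2) (at 0)"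
    and mx: "\<And>s. \<bar>s\<bar> < d \<Longrightarrow> g s \<le> g 0"
  shows "g2 \<le> 0"
proof (rule ccontr)
  assume "\<not> g2 \<le> 0"
  hence pos: "g2 > 0" by simp
  have g0: "g' 0 = 0"
    using DERIV_local_max[OF dg[of 0] d] mx d by auto
  from DERIV_pos_inc_right[OF dg2 pos] obtain e where e: "e > 0"
    and inc: "\<And>h. h > 0 \<Longrightarrow> h < e \<Longrightarrow> g' 0 < g' (0 + h)" by blast
  define s where "s = min e d / 2"
  have s: "0 < s" "s < e" "s < d" using e d by (auto simp: s_def)
  have "\<exists>z. 0 < z \<and> z < s \<and> g s - g 0 = (s - 0) * g' z"
    by (rule MVT2) (use s in \<open>auto intro!: dg\<close>)
  then obtain z where z: "0 < z" "z < s" "g s - g 0 = s * g' z" by auto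
  have "g' z > 0" using inc[of z] z s g0 by auto
  hence "g s > g 0" using z s mult_pos_pos[of s "g' z"] by linarith
  moreover have "g s \<le> g 0" using mx s by auto
  ultimately show False by simp
qed

lemma hessian_trace_le:
  fixes v :: "'a::euclidean_space \<Rightarrow> real" and Dv :: "'a \<Rightarrow> 'a" and D2 :: "'a \<Rightarrow> 'a"
  assumes S: "open S" "x \<in> S"
    and mx: "\<And>y. y \<in> S \<Longrightarrow> v y \<le> v x"
    and dv: "\<And>y. y \<in> S \<Longrightarrow> (v has_derivative (\<lambda>h. Dv y \<bullet> h)) (at y)"
    and d2: "(Dv has_derivative D2) (at x)"
  shows "(\<Sum>b\<in>Basis. D2 b \<bullet> b) \<le> 0"
proof (rule sum_nonpos)
  fix b :: 'a assume b: "b \<in> Basis"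
  obtain d where d: "d > 0" "ball x d \<subseteq> S" using S open_contains_ball by blast
  have inS: "x + s *\<^sub>R b \<in> S" if "\<bar>s\<bar> < d" for s
  proof -
    have "dist x (x + s *\<^sub>R b) = \<bar>s\<bar>" using b by (simp add: dist_norm)
    thus ?thesis using d that by auto
  qed
  have lin: "linear D2" using d2 has_derivative_linear by blast
  show "D2 b \<bullet> b \<le> 0"
  proof (rule second_deriv_max_1d[where g="\<lambda>s. v (x + s *\<^sub>R b)" and g'="\<lambda>s. Dv (x + s *\<^sub>R b) \<bullet> b", OF d(1)])
    fix s :: real assume s: "\<bar>s\<bar> < d"
    have "((\<lambda>s. x + s *\<^sub>R b) has_derivative (\<lambda>h. h *\<^sub>R b)) (at s)"
      by (auto intro!: derivative_eq_intros)
    from has_derivative_compose[OF this dv[OF inS[OF s]]]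
    have "((\<lambda>s. v (x + s *\<^sub>R b)) has_derivative (\<lambda>h. Dv (x + s *\<^sub>R b) \<bullet> (h *\<^sub>R b))) (at s)" .
    thus "((\<lambda>s. v (x + s *\<^sub>R b)) has_real_derivative Dv (x + s *\<^sub>R b) \<bullet> b) (at s)"
      by (simp add: has_real_derivative_iff_has_vector_derivative has_vector_derivative_def mult.commute)
  next
    have "((\<lambda>s. x + s *\<^sub>R b) has_derivative (\<lambda>h. h *\<^sub>R b)) (at 0)"
      by (auto intro!: derivative_eq_intros)
    from has_derivative_compose[OF this, of Dv D2] d2
    have "((\<lambda>s. Dv (x + s *\<^sub>R b)) has_derivative (\<lambda>h. D2 (h *\<^sub>R b))) (at 0)" by simp
    hence "((\<lambda>s. Dv (x + s *\<^sub>R b) \<bullet> b) has_derivative (\<lambda>h. D2 (h *\<^sub>R b) \<bullet> b)) (at 0)"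
      by (auto intro!: derivative_eq_intros)
    moreover have "(\<lambda>h. D2 (h *\<^sub>R b) \<bullet> b) = (\<lambda>h. (D2 b \<bullet> b) * h)"
      using linear_scale[OF lin] by auto
    ultimately show "((\<lambda>s. Dv (x + s *\<^sub>R b) \<bullet> b) has_real_derivative D2 b \<bullet> b) (at 0)"
      by (simp add: has_field_derivative_def)
  next
    fix s :: real assume "\<bar>s\<bar> < d"
    thus "v (x + s *\<^sub>R b) \<le> v (x + 0 *\<^sub>R b)" using mx inS by simp
  qed
qed

lemma max_principle:
  fixes u :: "'a::euclidean_space \<Rightarrow> real \<Rightarrow> real"
    and Du :: "'a \<Rightarrow> real \<Rightarrow> 'a"
    and D2u :: "'a \<Rightarrow> real \<Rightarrow> 'a \<Rightarrow> 'a"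
    and ut :: "'a \<Rightarrow> real \<Rightarrow> real"
    and F F1 F2 G G1 :: "real \<Rightarrow> real"
  assumes grad: "\<And>x t. x \<noteq> 0 \<Longrightarrow> t < \<Lambda> \<Longrightarrow>
                 ((\<lambda>y. u y t) has_derivative (\<lambda>h. Du x t \<bullet> h)) (at x)"
    and hess: "\<And>x t. x \<noteq> 0 \<Longrightarrow> t < \<Lambda> \<Longrightarrow>
                 ((\<lambda>y. Du y t) has_derivative D2u x t) (at x)"
    and tder: "\<And>x t. x \<noteq> 0 \<Longrightarrow> t < \<Lambda> \<Longrightarrow>
                 ((\<lambda>s. u x s) has_real_derivative ut x t) (at t)"
    and cont_u: "continuous_on ((UNIV - {0}) \<times> {..<\<Lambda>}) (\<lambda>(x, t). u x t)"
    and heat: "\<And>x t. x \<noteq> 0 \<Longrightarrow> t < \<Lambda> \<Longrightarrow>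
                 ut x t = (\<Sum>b\<in>Basis. D2u x t b \<bullet> b)"
    and r: "r > 0" and bL: "b < \<Lambda>"
    and dF: "\<And>s. s > 0 \<Longrightarrow> (F has_real_derivative F1 s) (at s)"
    and dF1: "\<And>s. s > 0 \<Longrightarrow> (F1 has_real_derivative F2 s) (at s)"
    and dG: "\<And>t. (G has_real_derivative G1 t) (at t)"
    and strict: "\<And>s t. r^2 \<le> s \<Longrightarrow> s \<le> R^2 \<Longrightarrow> a < t \<Longrightarrow> t \<le> b \<Longrightarrow>
          G1 t - (2 * real DIM('a) * F1 s + 4 * s * F2 s) > 0"
    and lat: "\<And>x t. norm x = r \<or> norm x = R \<Longrightarrow> a \<le> t \<Longrightarrow> t \<le> b \<Longrightarrow>
          u x t \<le> F (norm x ^ 2) + G t"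
    and bot: "\<And>x. r \<le> norm x \<Longrightarrow> norm x \<le> R \<Longrightarrow> u x a \<le> F (norm x ^ 2) + G a"
    and x: "r \<le> norm x0" "norm x0 \<le> R" and t: "a \<le> t0" "t0 \<le> b"
  shows "u x0 t0 \<le> F (norm x0 ^ 2) + G t0"
proof (rule ccontr)
  assume neg: "\<not> ?thesis"
  define K where "K = {x::'a. r \<le> norm x \<and> norm x \<le> R} \<times> {a..b}"
  define V where "V = (\<lambda>(x::'a, t). u x t - F (norm x ^ 2) - G t)"
  have Kin: "K \<subseteq> (UNIV - {0}) \<times> {..<\<Lambda>}" using r bL by (auto simp: K_def)
  have "compact {x::'a. r \<le> norm x \<and> norm x \<le> R}"
  proof (subst compact_eq_bounded_closed, intro conjI)
    show "bounded {x::'a. r \<le> norm x \<and> norm x \<le> R}"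
      by (rule boundedI[of _ R]) auto
    show "closed {x::'a. r \<le> norm x \<and> norm x \<le> R}"
      by (intro closed_Collect_conj closed_Collect_le continuous_intros)
  qed
  hence cK: "compact K" unfolding K_def by (intro compact_Times) auto
  have ne: "K \<noteq> {}" using x t by (auto simp: K_def)
  have contV: "continuous_on K V"
  proof -
    have c1: "continuous_on K (\<lambda>(x, t). u x t)"
      using continuous_on_subset[OF cont_u Kin] .
    have c2: "continuous_on K (\<lambda>p. F (norm (fst p) ^ 2))"
    proof (rule continuous_at_imp_continuous_on, rule ballI)
      fix p assume p: "p \<in> K"
      hence "norm (fst p) ^ 2 > 0" using r by (auto simp: K_def)
      hence "isCont F (norm (fst p) ^ 2)" using dF DERIV_isCont by blast
      moreover have "isCont (\<lambda>p. norm (fst p) ^ 2) p" by (intro continuous_intros)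
      ultimately show "isCont (\<lambda>p. F (norm (fst p) ^ 2)) p" using isCont_o2 by blast
    qed
    have c3: "continuous_on K (\<lambda>p. G (snd p))"
    proof (rule continuous_at_imp_continuous_on, rule ballI)
      fix p assume p: "p \<in> K"
      have "isCont G (snd p)" using dG DERIV_isCont by blast
      moreover have "isCont snd p" by (intro continuous_intros)
      ultimately show "isCont (\<lambda>p. G (snd p)) p" using isCont_o2 by blast
    qed
    have "V = (\<lambda>p. (\<lambda>(x, t). u x t) p - F (norm (fst p) ^ 2) - G (snd p))"
      by (auto simp: V_def)
    thus ?thesis using c1 c2 c3 by (auto intro!: continuous_on_diff)
  qed
  obtain p where pK: "p \<in> K" and pmax: "\<And>q. q \<in> K \<Longrightarrow> V q \<le> V p"
    using continuous_attains_sup[OF cK ne contV] by blast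
  obtain xs ts where p: "p = (xs, ts)" by (cases p)
  have "V (x0, t0) > 0" using neg by (simp add: V_def)
  moreover have "(x0, t0) \<in> K" using x t by (auto simp: K_def)
  ultimately have Vpos: "V p > 0" using pmax by force
  have xs: "r < norm xs" "norm xs < R"
    using lat[of xs ts] pK Vpos by (auto simp: K_def V_def p order_le_less)
  have ts: "a < ts" "ts \<le> b"
    using bot[of xs] pK Vpos by (auto simp: K_def V_def p order_le_less)
  have xs0: "xs \<noteq> 0" using xs r by auto
  have tsL: "ts < \<Lambda>" using ts bL by simp
  define s where "s = norm xs ^ 2"
  have s_pos: "s > 0" using xs0 by (simp add: s_def)
  have time: "ut xs ts - G1 ts \<ge> 0"
  proof (rule ccontr)
    assume "\<not> ?thesis"
    hence lt: "ut xs ts - G1 ts < 0" by simp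
    have d: "((\<lambda>t. u xs t - F s - G t) has_real_derivative ut xs ts - G1 ts) (at ts)"
      using tder[OF xs0 tsL] dG[of ts] by (auto intro!: derivative_eq_intros)
    from DERIV_neg_dec_left[OF d lt] obtain d where d: "d > 0"
      and dec: "\<And>h. h > 0 \<Longrightarrow> h < d \<Longrightarrow> u xs ts - F s - G ts < u xs (ts - h) - F s - G (ts - h)"
      by blast
    define h where "h = min d (ts - a) / 2"
    have h: "h > 0" "h < d" "h \<le> ts - a" using d ts by (auto simp: h_def)
    have "(xs, ts - h) \<in> K" using pK h by (auto simp: K_def p)
    hence "V (xs, ts - h) \<le> V p" by (rule pmax)
    thus False using dec[OF h(1) h(2)] by (simp add: V_def p s_def)
  qed
  define S where "S = {y::'a. r < norm y \<and> norm y < R}"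
  have Sopen: "open S" unfolding S_def
    by (intro open_Collect_conj open_Collect_less continuous_intros)
  have dnorm: "((\<lambda>y. F (norm y ^ 2)) has_derivative (\<lambda>h. (2 * F1 (norm y ^ 2)) *\<^sub>R y \<bullet> h)) (at y)"
    if "y \<noteq> 0" for y :: 'a
  proof -
    have e: "(\<lambda>y. F (norm y ^ 2)) = (\<lambda>y. F (y \<bullet> y))" by (simp add: power2_norm_eq_inner)
    have "((\<lambda>y. y \<bullet> y) has_derivative (\<lambda>h. h \<bullet> y + y \<bullet> h)) (at y)"
      by (auto intro!: derivative_eq_intros)
    moreover have "(F has_derivative (\<lambda>h. F1 (y \<bullet> y) * h)) (at (y \<bullet> y))"
      using dF[of "y \<bullet> y"] that by (simp add: has_field_derivative_def)
    ultimately have "((\<lambda>y. F (y \<bullet> y)) has_derivative (\<lambda>h. F1 (y \<bullet> y) * (h \<bullet> y + y \<bullet> h))) (at y)"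
      using has_derivative_compose by blast
    thus ?thesis unfolding e by (simp add: power2_norm_eq_inner inner_commute algebra_simps)
  qed
  define Dv where "Dv = (\<lambda>y. Du y ts - (2 * F1 (norm y ^ 2)) *\<^sub>R y)"
  define D2 where "D2 = (\<lambda>h. D2u xs ts h - ((2 * F1 s) *\<^sub>R h + (4 * F2 s * (xs \<bullet> h)) *\<^sub>R xs))"
  have tr: "(\<Sum>bb\<in>Basis. D2 bb \<bullet> bb) \<le> 0"
  proof (rule hessian_trace_le[where v="\<lambda>y. u y ts - F (norm y ^ 2) - G ts" and S=S])
    show "open S" by (rule Sopen)
    show "xs \<in> S" using xs by (simp add: S_def)
    fix y assume y: "y \<in> S"
    hence "(y, ts) \<in> K" using ts pK by (auto simp: S_def K_def p)
    thus "u y ts - F (norm y ^ 2) - G ts \<le> u xs ts - F (norm xs ^ 2) - G ts"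
      using pmax[of "(y, ts)"] by (simp add: V_def p)
    have y0: "y \<noteq> 0" using y r by (auto simp: S_def)
    show "((\<lambda>y. u y ts - F (norm y ^ 2) - G ts) has_derivative (\<lambda>h. Dv y \<bullet> h)) (at y)"
      using grad[OF y0 tsL] dnorm[OF y0] unfolding Dv_def
      by (auto intro!: derivative_eq_intros simp: inner_diff_left)
  next
    have e: "(\<lambda>y. F1 (norm y ^ 2)) = (\<lambda>y. F1 (y \<bullet> y))" by (simp add: power2_norm_eq_inner)
    have "((\<lambda>y. y \<bullet> y) has_derivative (\<lambda>h. h \<bullet> xs + xs \<bullet> h)) (at xs)"
      by (auto intro!: derivative_eq_intros)
    moreover have "(F1 has_derivative (\<lambda>h. F2 (xs \<bullet> xs) * h)) (at (xs \<bullet> xs))"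
      using dF1[of "xs \<bullet> xs"] xs0 by (simp add: has_field_derivative_def)
    ultimately have "((\<lambda>y. F1 (y \<bullet> y)) has_derivative (\<lambda>h. F2 (xs \<bullet> xs) * (h \<bullet> xs + xs \<bullet> h))) (at xs)"
      using has_derivative_compose by blast
    hence dF1n: "((\<lambda>y. F1 (norm y ^ 2)) has_derivative (\<lambda>h. 2 * F2 s * (xs \<bullet> h))) (at xs)"
      unfolding e by (simp add: s_def power2_norm_eq_inner inner_commute algebra_simps)
    have "((\<lambda>y. (2 * F1 (norm y ^ 2)) *\<^sub>R y) has_derivative
         (\<lambda>h. (2 * F1 (norm xs ^ 2)) *\<^sub>R h + (2 * (2 * F2 s * (xs \<bullet> h))) *\<^sub>R xs)) (at xs)"
      using dF1n by (auto intro!: derivative_eq_intros)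
    thus "(Dv has_derivative D2) (at xs)"
      using hess[OF xs0 tsL] unfolding Dv_def D2_def
      by (auto intro!: derivative_eq_intros simp: s_def algebra_simps)
  qed
  have "(\<Sum>bb\<in>Basis. D2 bb \<bullet> bb) = ut xs ts - 2 * real DIM('a) * F1 s - 4 * s * F2 s"
  proof -
    have "(\<Sum>bb\<in>Basis. D2 bb \<bullet> bb) = (\<Sum>bb\<in>Basis. D2u xs ts bb \<bullet> bb)
        - (\<Sum>bb\<in>(Basis::'a set). 2 * F1 s) - 4 * F2 s * (\<Sum>bb\<in>Basis. (xs \<bullet> bb) * (xs \<bullet> bb))"
      unfolding D2_def
      by (simp add: inner_diff_left inner_add_left sum_subtractf sum_distrib_left sum.distrib algebra_simps)
    also have "(\<Sum>bb\<in>Basis. (xs \<bullet> bb) * (xs \<bullet> bb)) = s"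
      by (simp add: s_def power2_norm_eq_inner euclidean_inner[of xs xs])
    finally show ?thesis using heat[OF xs0 tsL] by simp
  qed
  with tr time strict[of s ts] xs ts s_def r
  show False
    by (smt (verit) power_mono s_def norm_ge_zero)
qed


lemma upper_zero:
  fixes u :: "'a::euclidean_space \<Rightarrow> real \<Rightarrow> real"
    and Du :: "'a \<Rightarrow> real \<Rightarrow> 'a"
    and D2u :: "'a \<Rightarrow> real \<Rightarrow> 'a \<Rightarrow> 'a"
    and ut :: "'a \<Rightarrow> real \<Rightarrow> real"
    and \<Lambda> C \<nu> :: real
  assumes grad: "\<And>x t. x \<noteq> 0 \<Longrightarrow> t < \<Lambda> \<Longrightarrow>
                 ((\<lambda>y. u y t) has_derivative (\<lambda>h. Du x t \<bullet> h)) (at x)"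
    and hess: "\<And>x t. x \<noteq> 0 \<Longrightarrow> t < \<Lambda> \<Longrightarrow>
                 ((\<lambda>y. Du y t) has_derivative D2u x t) (at x)"
    and tder: "\<And>x t. x \<noteq> 0 \<Longrightarrow> t < \<Lambda> \<Longrightarrow>
                 ((\<lambda>s. u x s) has_real_derivative ut x t) (at t)"
    and cont_u: "continuous_on ((UNIV - {0}) \<times> {..<\<Lambda>}) (\<lambda>(x, t). u x t)"
    and heat: "\<And>x t. x \<noteq> 0 \<Longrightarrow> t < \<Lambda> \<Longrightarrow>
                 ut x t = (\<Sum>b\<in>Basis. D2u x t b \<bullet> b)"
    and C_pos: "C > 0"
    and nu_pos: "0 < \<nu>" and nu_lt: "\<nu> < real DIM('a) - 2"
    and bound0: "\<And>x t. x \<noteq> 0 \<Longrightarrow> t < \<Lambda> \<Longrightarrow> u x t \<le> C * norm x powr (- \<nu>)"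
    and xz: "xz \<noteq> 0" and tz: "tz < \<Lambda>"
  shows "u xz tz \<le> 0"
proof (rule field_le_epsilon)
  fix e :: real assume e: "e > 0"
  define m where "m = real DIM('a)"
  define q where "q = (m - 2) / 2"
  define \<alpha> where "\<alpha> = m - 2 - \<nu>"
  have \<alpha>: "\<alpha> > 0" using nu_lt by (simp add: \<alpha>_def m_def)
  have m3: "m > 2" using nu_lt nu_pos by (simp add: m_def)
  define \<rho> where "\<rho> = norm xz"
  have \<rho>: "\<rho> > 0" using xz by (simp add: \<rho>_def)
  define \<epsilon> where "\<epsilon> = e / (3 * \<rho> powr (2 - m))"
  have \<epsilon>: "\<epsilon> > 0" using e \<rho> by (simp add: \<epsilon>_def)
  have \<epsilon>\<rho>: "\<epsilon> * \<rho> powr (2 - m) = e / 3" using \<rho> by (simp add: \<epsilon>_def)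
  define \<delta> where "\<delta> = e / 3"
  have \<delta>: "\<delta> > 0" using e by (simp add: \<delta>_def)
  define r where "r = min (\<rho> / 2) ((\<epsilon> / C) powr (1 / \<alpha>))"
  have r: "r > 0" "r \<le> \<rho>" using \<rho> \<epsilon> C_pos by (auto simp: r_def)
  have r\<alpha>: "C * r powr \<alpha> \<le> \<epsilon>"
  proof -
    have "r powr \<alpha> \<le> ((\<epsilon> / C) powr (1 / \<alpha>)) powr \<alpha>"
      using r \<alpha> by (intro powr_mono2) (auto simp: r_def)
    also have "\<dots> = \<epsilon> / C" using \<alpha> \<epsilon> C_pos by (simp add: powr_powr)
    finally show ?thesis using C_pos by (simp add: field_simps)
  qed
  define R where "R = max (2 * \<rho>) ((C / \<delta>) powr (1 / \<nu>))"
  have R: "R \<ge> \<rho>" "R > 0" using \<rho> by (auto simp: R_def)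
  have R\<nu>: "C * R powr (- \<nu>) \<le> \<delta>"
  proof -
    have "C / \<delta> = ((C / \<delta>) powr (1 / \<nu>)) powr \<nu>" using nu_pos \<delta> C_pos by (simp add: powr_powr)
    also have "\<dots> \<le> R powr \<nu>" using nu_pos \<delta> C_pos by (intro powr_mono2) (auto simp: R_def)
    finally have "C / \<delta> \<le> R powr \<nu>" .
    thus ?thesis using R \<delta> C_pos by (simp add: powr_minus field_simps)
  qed
  have rR: "r \<le> R" using r R by simp
  define \<eta> where "\<eta> = e / (6 * R^2)"
  have \<eta>: "\<eta> > 0" using e R by (simp add: \<eta>_def)
  have \<eta>R: "\<eta> * R^2 = e / 6" using R by (simp add: \<eta>_def)
  define M where "M = C * r powr (- \<nu>)"
  define a where "a = tz - M / \<eta> - 1"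
  have M: "M > 0" using C_pos r by (simp add: M_def)
  have a: "a < tz" using divide_pos_pos[OF M \<eta>] by (simp add: a_def)
  have a\<eta>: "\<eta> * (tz - a) \<ge> M" using \<eta> M by (simp add: a_def field_simps)
  define \<kappa> where "\<kappa> = e / (6 * (tz - a))"
  have \<kappa>: "\<kappa> > 0" using e a by (simp add: \<kappa>_def)
  have \<kappa>a: "\<kappa> * (tz - a) = e / 6" using a by (simp add: \<kappa>_def field_simps)
  define F where "F = (\<lambda>s::real. \<epsilon> * s powr (- q) - \<eta> * s)"
  define F1 where "F1 = (\<lambda>s::real. - \<epsilon> * q * s powr (- q - 1) - \<eta>)"
  define F2 where "F2 = (\<lambda>s::real. \<epsilon> * q * (q + 1) * s powr (- q - 2))"
  define G where "G = (\<lambda>t::real. \<delta> + \<eta> * (2 * m * (tz - t) + R^2) + \<kappa> * (t - a))"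
  define G1 where "G1 = (\<lambda>t::real. - 2 * m * \<eta> + \<kappa>)"
  have Fpow: "(norm x ^ 2) powr (- q) = norm x powr (2 - m)" if "x \<noteq> 0" for x :: 'a
  proof -
    have e2: "norm x powr 2 = norm x ^ 2" using that powr_realpow[of "norm x" 2] by simp
    have "(norm x ^ 2) powr (- q) = norm x powr (2 * - q)" unfolding e2[symmetric] powr_powr ..
    also have "2 * - q = 2 - m" by (simp add: q_def field_simps)
    finally show ?thesis .
  qed
  have main: "u xz tz \<le> F (norm xz ^ 2) + G tz"
  proof (rule max_principle[of \<Lambda> u Du D2u ut r tz F F1 F2 G G1 R a xz tz])
    show "\<And>x t. x \<noteq> 0 \<Longrightarrow> t < \<Lambda> \<Longrightarrow> ((\<lambda>y. u y t) has_derivative (\<lambda>h. Du x t \<bullet> h)) (at x)"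
      by (rule grad)
    show "\<And>x t. x \<noteq> 0 \<Longrightarrow> t < \<Lambda> \<Longrightarrow> ((\<lambda>y. Du y t) has_derivative D2u x t) (at x)"
      by (rule hess)
    show "\<And>x t. x \<noteq> 0 \<Longrightarrow> t < \<Lambda> \<Longrightarrow> ((\<lambda>s. u x s) has_real_derivative ut x t) (at t)"
      by (rule tder)
    show "continuous_on ((UNIV - {0}) \<times> {..<\<Lambda>}) (\<lambda>(x, t). u x t)" by (rule cont_u)
    show "\<And>x t. x \<noteq> 0 \<Longrightarrow> t < \<Lambda> \<Longrightarrow> ut x t = (\<Sum>b\<in>Basis. D2u x t b \<bullet> b)" by (rule heat)
    show "r > 0" by (rule r)
    show "tz < \<Lambda>" by (rule tz)
    show "\<And>s. s > 0 \<Longrightarrow> (F has_real_derivative F1 s) (at s)"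
      unfolding F_def F1_def by (auto intro!: derivative_eq_intros simp: algebra_simps)
    show "\<And>s. s > 0 \<Longrightarrow> (F1 has_real_derivative F2 s) (at s)"
      unfolding F1_def F2_def by (auto intro!: derivative_eq_intros simp: algebra_simps)
    show "\<And>t. (G has_real_derivative G1 t) (at t)"
      unfolding G_def G1_def by (auto intro!: derivative_eq_intros simp: algebra_simps)
  next
    fix s t :: real assume s: "r^2 \<le> s" "s \<le> R^2" and t: "a < t" "t \<le> tz"
    have sp: "s > 0" using s r by (smt (verit) zero_less_power)
    have ss: "s * s powr (- q - 2) = s powr (- q - 1)"
      using sp by (simp add: powr_diff power2_eq_square field_simps)
    have "G1 t - (2 * m * F1 s + 4 * s * F2 s) = \<kappa> + \<epsilon> * q * (2 * m - 4 * (q + 1)) * s powr (- q - 1)"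
      unfolding G1_def F1_def F2_def ss[symmetric] by (simp add: algebra_simps)
    also have "2 * m - 4 * (q + 1) = 0" by (simp add: q_def field_simps)
    finally show "G1 t - (2 * real DIM('a) * F1 s + 4 * s * F2 s) > 0" using \<kappa> by (simp add: m_def)
  next
    fix x :: 'a and t assume x: "norm x = r \<or> norm x = R" and t: "a \<le> t" "t \<le> tz"
    have xz': "x \<noteq> 0" using x r R by auto
    have tL: "t < \<Lambda>" using t tz by simp
    have nx: "norm x \<le> R" using x rR by auto
    have Gt: "G t \<ge> \<delta> + \<eta> * R^2"
    proof -
      have "\<eta> * (2 * m * (tz - t)) \<ge> 0" "\<kappa> * (t - a) \<ge> 0" using t \<eta> \<kappa> m3 by auto
      thus ?thesis unfolding G_def by (simp add: algebra_simps)
    qed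
    have nx2: "\<eta> * norm x ^ 2 \<le> \<eta> * R^2" using nx \<eta> by (simp add: power_mono)
    have Fx: "F (norm x ^ 2) = \<epsilon> * norm x powr (2 - m) - \<eta> * norm x ^ 2"
      using Fpow[OF xz'] by (simp add: F_def)
    have pos: "\<epsilon> * norm x powr (2 - m) \<ge> 0" using \<epsilon> by simp
    show "u x t \<le> F (norm x ^ 2) + G t"
    proof (cases "norm x = r")
      case True
      have "C * r powr (- \<nu>) = (C * r powr \<alpha>) * r powr (2 - m)"
        using r by (simp add: \<alpha>_def powr_add[symmetric])
      also have "\<dots> \<le> \<epsilon> * r powr (2 - m)" using r\<alpha> by (intro mult_right_mono) auto
      finally have "u x t \<le> \<epsilon> * r powr (2 - m)" using bound0[OF xz' tL] True by simp
      thus ?thesis using Fx Gt nx2 \<delta> True by simp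
    next
      case False
      hence "norm x = R" using x by simp
      hence "u x t \<le> \<delta>" using bound0[OF xz' tL] R\<nu> by simp
      thus ?thesis using Fx Gt nx2 pos by simp
    qed
  next
    fix x :: 'a assume x: "r \<le> norm x" "norm x \<le> R"
    have xz': "x \<noteq> 0" using x r by auto
    have aL: "a < \<Lambda>" using a tz by simp
    have "u x a \<le> C * norm x powr (- \<nu>)" by (rule bound0[OF xz' aL])
    also have "\<dots> \<le> M" unfolding M_def using C_pos nu_pos r x
      by (intro mult_left_mono powr_mono2') auto
    finally have ua: "u x a \<le> M" .
    have nx2: "\<eta> * norm x ^ 2 \<le> \<eta> * R^2" using x \<eta> r by (simp add: power_mono)
    have Fx: "F (norm x ^ 2) = \<epsilon> * norm x powr (2 - m) - \<eta> * norm x ^ 2"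
      using Fpow[OF xz'] by (simp add: F_def)
    have pos: "\<epsilon> * norm x powr (2 - m) \<ge> 0" using \<epsilon> by simp
    have "G a \<ge> \<eta> * (tz - a) + \<eta> * R^2"
    proof -
      have "\<eta> * (2 * m * (tz - a)) \<ge> \<eta> * (tz - a)"
        using \<eta> a m3 by (intro mult_left_mono) auto
      thus ?thesis unfolding G_def using \<delta> by (simp add: algebra_simps)
    qed
    thus "u x a \<le> F (norm x ^ 2) + G a" using ua a\<eta> Fx nx2 pos by simp
  next
    show "r \<le> norm xz" "norm xz \<le> R" using r R by (auto simp: \<rho>_def)
    show "a \<le> tz" "tz \<le> tz" using a by auto
  qed
  have "F (norm xz ^ 2) + G tz = e / 3 - \<eta> * \<rho>^2 + \<delta> + \<eta> * R^2 + \<kappa> * (tz - a)"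
    using Fpow[OF xz] \<epsilon>\<rho> by (simp add: F_def G_def \<rho>_def algebra_simps)
  also have "\<dots> \<le> e"
  proof -
    have "\<eta> * \<rho>^2 \<ge> 0" using \<eta> by simp
    thus ?thesis using \<eta>R \<kappa>a unfolding \<delta>_def by linarith
  qed
  finally show "u xz tz \<le> 0 + e" using main by simp
qed


theorem proposition6p4:
  fixes u :: "'a::euclidean_space \<Rightarrow> real \<Rightarrow> real"
    and Du :: "'a \<Rightarrow> real \<Rightarrow> 'a"
    and D2u :: "'a \<Rightarrow> real \<Rightarrow> 'a \<Rightarrow> 'a"
    and ut :: "'a \<Rightarrow> real \<Rightarrow> real"
    and \<Lambda> C \<nu> :: real
  assumes dim: "DIM('a) \<ge> 3"
    and grad: "\<And>x t. x \<noteq> 0 \<Longrightarrow> t < \<Lambda> \<Longrightarrow>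
                 ((\<lambda>y. u y t) has_derivative (\<lambda>h. Du x t \<bullet> h)) (at x)"
    and hess: "\<And>x t. x \<noteq> 0 \<Longrightarrow> t < \<Lambda> \<Longrightarrow>
                 ((\<lambda>y. Du y t) has_derivative D2u x t) (at x)"
    and tder: "\<And>x t. x \<noteq> 0 \<Longrightarrow> t < \<Lambda> \<Longrightarrow>
                 ((\<lambda>s. u x s) has_real_derivative ut x t) (at t)"
    and cont_u: "continuous_on ((UNIV - {0}) \<times> {..<\<Lambda>}) (\<lambda>(x, t). u x t)"
    and cont_Du: "continuous_on ((UNIV - {0}) \<times> {..<\<Lambda>}) (\<lambda>(x, t). Du x t)"
    and cont_D2u: "\<And>b. b \<in> Basis \<Longrightarrow>
                 continuous_on ((UNIV - {0}) \<times> {..<\<Lambda>}) (\<lambda>(x, t). D2u x t b)"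
    and cont_ut: "continuous_on ((UNIV - {0}) \<times> {..<\<Lambda>}) (\<lambda>(x, t). ut x t)"
    and heat: "\<And>x t. x \<noteq> 0 \<Longrightarrow> t < \<Lambda> \<Longrightarrow>
                 ut x t = (\<Sum>b\<in>Basis. D2u x t b \<bullet> b)"
    and C_pos: "C > 0"
    and nu_pos: "0 < \<nu>" and nu_lt: "\<nu> < real DIM('a) - 2"
    and bound0: "\<And>x t. x \<noteq> 0 \<Longrightarrow> t < \<Lambda> \<Longrightarrow> \<bar>u x t\<bar> \<le> C * norm x powr (- \<nu>)"
    and bound1: "\<And>x t. x \<noteq> 0 \<Longrightarrow> t < \<Lambda> \<Longrightarrow> norm (Du x t) \<le> C * norm x powr (- \<nu> - 1)"
    and bound2: "\<And>x t. x \<noteq> 0 \<Longrightarrow> t < \<Lambda> \<Longrightarrow>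
                 sqrt (\<Sum>b\<in>Basis. (norm (D2u x t b))\<^sup>2) \<le> C * norm x powr (- \<nu> - 2)"
  shows "\<forall>x t. x \<noteq> 0 \<and> t < \<Lambda> \<longrightarrow> u x t = 0"
proof (intro allI impI)
  fix x :: 'a and t :: real assume xt: "x \<noteq> 0 \<and> t < \<Lambda>"
  have le: "u x t \<le> 0"
  proof (rule upper_zero[where Du=Du and D2u=D2u and ut=ut and C=C and \<nu>=\<nu> and \<Lambda>=\<Lambda> and xz=x and tz=t])
    show "\<And>x t. x \<noteq> 0 \<Longrightarrow> t < \<Lambda> \<Longrightarrow> u x t \<le> C * norm x powr (- \<nu>)"
      using bound0 abs_le_D1 by blast
  qed (use assms xt in auto)
  have "- u x t \<le> 0"
  proof (rule upper_zero[where u="\<lambda>x t. - u x t" and Du="\<lambda>x t. - Du x t" and D2u="\<lambda>x t h. - D2u x t h"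
        and ut="\<lambda>x t. - ut x t" and C=C and \<nu>=\<nu> and \<Lambda>=\<Lambda> and xz=x and tz=t])
    show "\<And>x t. x \<noteq> 0 \<Longrightarrow> t < \<Lambda> \<Longrightarrow> ((\<lambda>y. - u y t) has_derivative (\<lambda>h. - Du x t \<bullet> h)) (at x)"
      using grad by (auto intro!: derivative_eq_intros)
    show "\<And>x t. x \<noteq> 0 \<Longrightarrow> t < \<Lambda> \<Longrightarrow> ((\<lambda>y. - Du y t) has_derivative (\<lambda>h. - D2u x t h)) (at x)"
      using hess by (auto intro!: derivative_eq_intros)
    show "\<And>x t. x \<noteq> 0 \<Longrightarrow> t < \<Lambda> \<Longrightarrow> ((\<lambda>s. - u x s) has_real_derivative - ut x t) (at t)"
      using tder by (auto intro!: derivative_eq_intros)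
    show "continuous_on ((UNIV - {0}) \<times> {..<\<Lambda>}) (\<lambda>(x, t). - u x t)"
      using continuous_on_minus[OF cont_u] by (simp add: case_prod_beta)
    show "\<And>x t. x \<noteq> 0 \<Longrightarrow> t < \<Lambda> \<Longrightarrow> - ut x t = (\<Sum>b\<in>Basis. - D2u x t b \<bullet> b)"
      using heat by (simp add: sum_negf)
    show "\<And>x t. x \<noteq> 0 \<Longrightarrow> t < \<Lambda> \<Longrightarrow> - u x t \<le> C * norm x powr (- \<nu>)"
      using bound0 abs_le_D2 by blast
  qed (use assms xt in auto)
  with le show "u x t = 0" by simp
qed

end
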